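(* The inequality $\psi'(t)<e^{1/t}-1$ holds for all $t\in(0,\infty)$. More generally, the function $t\mapsto e^{1/t}-\psi'(t)$ is completely monotonic on $(0,\infty)$.
   Context: $\psi(x)=\Gamma'(x)/\Gamma(x)$ is the digamma function, where $\Gamma$ is Euler's gamma function, and $\psi'$ is its derivative (the trigamma function). A function $f$ is completely monotonic on an interval $I$ if $f$ has derivatives of all orders on $I$ and $0\le(-1)^k f^{(k)}(x)<\infty$ for all $k\ge0$ and $x\in I$. *)

theory Defs
  imports "HOL-Analysis.Analysis"
begin

definition completely_monotonic_on :: "(real \<Rightarrow> real) \<Rightarrow> real set \<Rightarrow> bool" where
  "completely_monotonic_on f I \<longleftrightarrow>
     (\<forall>k. \<forall>x\<in>I. ((deriv ^^ k) f has_real_derivative (deriv ^^ Suc k) f x) (at x)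
                  \<and> 0 \<le> (-1) ^ k * (deriv ^^ k) f x)"

end

theory Submission
  imports Defs
begin


definition tower :: "(nat \<Rightarrow> real \<Rightarrow> real) \<Rightarrow> real set \<Rightarrow> bool" where
  "tower D S \<longleftrightarrow> (\<forall>k. \<forall>x\<in>S. (D k has_real_derivative D (Suc k) x) (at x))"

lemma tower_deriv:
  assumes "open S" "tower D S" "\<And>x. x\<in>S \<Longrightarrow> f x = D 0 x" "x \<in> S"
  shows "(deriv ^^ k) f x = D k x"
  using assms(4)
proof (induction k arbitrary: x)
  case 0 thus ?case using assms(3) by simp
next
  case (Suc k)
  have ev: "eventually (\<lambda>y. (deriv^^k) f y = D k y) (nhds x)"
    using eventually_nhds_in_open[OF assms(1) Suc.prems] by (rule eventually_mono) (rule Suc.IH)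
  have "(deriv^^Suc k) f x = deriv ((deriv^^k) f) x" by simp
  also have "\<dots> = deriv (D k) x" by (rule deriv_cong_ev[OF ev refl])
  also have "\<dots> = D (Suc k) x" using assms(2) Suc.prems unfolding tower_def
    by (blast intro: DERIV_imp_deriv)
  finally show ?case .
qed

lemma tower_has_deriv:
  assumes "open S" "tower D S" "\<And>x. x\<in>S \<Longrightarrow> f x = D 0 x" "x \<in> S"
  shows "((deriv ^^ k) f has_real_derivative (deriv ^^ Suc k) f x) (at x)"
proof -
  have ev: "eventually (\<lambda>y. (deriv^^k) f y = D k y) (nhds x)"
    using eventually_nhds_in_open[OF assms(1,4)] by (rule eventually_mono) (rule tower_deriv[OF assms(1-3)])
  have "(D k has_real_derivative D (Suc k) x) (at x)" using assms(2,4) unfolding tower_def by blast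
  moreover have "(deriv ^^ Suc k) f x = D (Suc k) x" by (rule tower_deriv[OF assms])
  ultimately show ?thesis using DERIV_cong_ev[OF refl ev refl] by simp
qed

lemma cm_tower:
  assumes "open S" "tower D S" "\<And>x. x\<in>S \<Longrightarrow> f x = D 0 x"
    "\<And>k x. x \<in> S \<Longrightarrow> 0 \<le> (-1)^k * D k x"
  shows "completely_monotonic_on f S"
  unfolding completely_monotonic_on_def
proof (intro allI ballI conjI)
  fix k x assume x: "x \<in> S"
  show "((deriv ^^ k) f has_real_derivative (deriv ^^ Suc k) f x) (at x)"
    by (rule tower_has_deriv[OF assms(1-3) x])
  show "0 \<le> (-1)^k * (deriv ^^ k) f x"
    using assms(4)[OF x, of k] tower_deriv[OF assms(1-3) x, of k] by simp
qed

definition leib :: "(nat \<Rightarrow> real \<Rightarrow> real) \<Rightarrow> (nat \<Rightarrow> real \<Rightarrow> real) \<Rightarrow> nat \<Rightarrow> real \<Rightarrow> real" where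
  "leib D E n x = (\<Sum>i = 0..n. of_nat (n choose i) * D i x * E (n-i) x)"

lemma Suc_choose': "Suc n choose k = (n choose k) + (if k = 0 then 0 else (n choose (k-1)))"
  by (cases k) simp_all

lemma tower_leib:
  assumes "tower D S" "tower E S"
  shows "tower (leib D E) S"
  unfolding tower_def
proof (intro allI ballI)
  fix n x assume x: "x \<in> S"
  have *: "\<And>i. (D i has_real_derivative D (Suc i) x) (at x)" "\<And>i. (E i has_real_derivative E (Suc i) x) (at x)"
    using assms x unfolding tower_def by auto
  have sumeq: "(\<Sum>i = 0..n.
               of_nat (n choose i) * (D (Suc i) x * E (n-i) x + E (Suc (n-i)) x * D i x)) =
            E 0 x * D (Suc n) x + (\<Sum>i = 0..n. D i x * (of_nat (Suc n choose i) * E (Suc n - i) x))"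
    apply (simp add: Suc_choose' algebra_simps sum.distrib)
    apply (subst (4) sum_Suc_reindex)
    apply (auto simp: algebra_simps Suc_diff_le intro: sum.cong)
    done
  have "((\<lambda>x. \<Sum>i = 0..n. of_nat (n choose i) * D i x * E (n-i) x) has_real_derivative
     (\<Sum>i = 0..n. of_nat (n choose i) * (D (Suc i) x * E (n-i) x + E (Suc (n-i)) x * D i x))) (at x)"
    apply (rule DERIV_sum)
    apply (rule DERIV_cong[OF DERIV_mult[OF DERIV_cmult[OF *(1)] *(2)]])
    apply (simp add: algebra_simps)
    done
  moreover have "(\<Sum>i = 0..n. of_nat (n choose i) * (D (Suc i) x * E (n-i) x + E (Suc (n-i)) x * D i x))
     = leib D E (Suc n) x"
    unfolding sumeq leib_def by (simp add: algebra_simps sum.atLeast0_atMost_Suc)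
  ultimately show "(leib D E n has_real_derivative leib D E (Suc n) x) (at x)"
    unfolding leib_def[abs_def] by simp
qed



definition P :: "nat \<Rightarrow> real \<Rightarrow> nat \<Rightarrow> real \<Rightarrow> real" where
 "P n a k x = (-1)^k * pochhammer (real n) k * inverse (x+a) ^ (n+k)"

lemma hasP:
  assumes "x + a > 0"
  shows "(P n a k has_real_derivative P n a (Suc k) x) (at x)"
proof -
  have d: "((\<lambda>x. inverse (x+a) ^ m) has_real_derivative - (real m * inverse (x+a) ^ Suc m)) (at x)" for m
  proof (cases m)
    case 0 thus ?thesis by simp
  next
    case (Suc j)
    show ?thesis
      apply (rule DERIV_cong)
       apply (rule DERIV_power[OF DERIV_inverse_fun[OF DERIV_add[OF DERIV_ident DERIV_const]]])
      using assms Suc by (simp_all add: power2_eq_square field_simps)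
  qed
  show ?thesis unfolding P_def[abs_def]
    apply (rule DERIV_cong[OF DERIV_cmult[OF d]])
    apply (simp add: pochhammer_Suc algebra_simps)
    done
qed

lemma tower_P: "a \<ge> 0 \<Longrightarrow> tower (P n a) {0<..}"
  unfolding tower_def by (auto intro!: hasP)

lemma P_sign: "x + a > 0 \<Longrightarrow> (-1)^k * P n a k x = pochhammer (real n) k * inverse (x+a) ^ (n+k)"
  unfolding P_def by (simp flip: power_add add: mult_2[symmetric] power_mult)

lemma poch_nonneg: "0 \<le> pochhammer (real n) k"
  by (induction k) (simp_all add: pochhammer_Suc)

lemma P_sign_nonneg: "x + a > 0 \<Longrightarrow> 0 \<le> (-1)^k * P n a k x"
  by (simp add: P_sign poch_nonneg)

lemma poch2: "pochhammer (2::real) k = fact (Suc k)"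
  by (induction k) (simp_all add: pochhammer_Suc algebra_simps)

lemma tower_PG: "tower (\<lambda>k x. Polygamma (m + k) x) {0<..}"
  unfolding tower_def
proof (intro allI ballI)
  fix k and x :: real assume "x \<in> {0<..}"
  hence "x \<notin> \<int>\<^sub>\<le>\<^sub>0" by (auto elim: nonpos_Ints_cases)
  thus "((\<lambda>x. Polygamma (m + k) x) has_real_derivative Polygamma (m + Suc k) x) (at x)"
    using has_field_derivative_Polygamma[of x "m+k"] by simp
qed



definition cc :: "nat \<Rightarrow> nat \<Rightarrow> real" where
  "cc k m = (if 4 \<le> m then pochhammer (real m) k / fact m else 0)"

definition H :: "nat \<Rightarrow> real \<Rightarrow> real" where
  "H k x = (\<Sum>m. cc k m * x^m)"

definition SP :: "nat \<Rightarrow> real \<Rightarrow> real" where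
  "SP k t = (-1)^k * inverse t ^ k * H k (inverse t)"

lemma cc_Suc: "cc (Suc k) m = (real k + real m) * cc k m"
  by (simp add: cc_def pochhammer_Suc algebra_simps add_divide_distrib)

lemma diffs_shift: "y * (diffs (cc k) n * y^n) = real (Suc n) * cc k (Suc n) * y^Suc n"
  unfolding diffs_def power_Suc by (simp only: mult_ac)

lemma cc_Suc_pt: "cc (Suc k) m * y^m = real k * (cc k m * y^m) + real m * cc k m * y^m"
  by (simp add: cc_Suc distrib_right)

lemma cc_nonneg: "0 \<le> cc k m"
  by (simp add: cc_def poch_nonneg)

lemma summable_cc: "summable (\<lambda>m. cc k m * y^m)"
proof (induction k arbitrary: y)
  case 0
  show ?case
  proof (rule summable_comparison_test[OF _ summable_exp[of "\<bar>y\<bar>"]])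
    have c: "cc 0 n \<le> inverse (fact n)" for n by (simp add: cc_def divide_inverse)
    have "norm (cc 0 n * y ^ n) \<le> inverse (fact n) * \<bar>y\<bar> ^ n" for n
    proof -
      have "norm (cc 0 n * y ^ n) = cc 0 n * \<bar>y\<bar> ^ n"
        by (simp add: abs_mult power_abs cc_nonneg)
      also have "\<dots> \<le> inverse (fact n) * \<bar>y\<bar> ^ n"
        by (rule mult_right_mono[OF c]) simp
      finally show ?thesis .
    qed
    thus "\<exists>N. \<forall>n\<ge>N. norm (cc 0 n * y ^ n) \<le> inverse (fact n) * \<bar>y\<bar> ^ n" by blast
  qed
next
  case (Suc k)
  have d: "summable (\<lambda>n. diffs (cc k) n * y^n)"
    by (rule termdiff_converges_all) (use Suc.IH in auto)
  have "summable (\<lambda>n. y * (diffs (cc k) n * y^n))"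
    by (rule summable_mult[OF d])
  hence "summable (\<lambda>n. (\<lambda>m. real m * cc k m * y^m) (Suc n))"
    by (simp only: diffs_shift)
  hence s2: "summable (\<lambda>m. real m * cc k m * y^m)"
    using summable_Suc_iff[of "\<lambda>m. real m * cc k m * y^m"] by simp
  have "summable (\<lambda>m. real k * (cc k m * y^m) + real m * cc k m * y^m)"
    by (rule summable_add[OF summable_mult[OF Suc.IH] s2])
  thus ?case by (simp only: cc_Suc_pt)
qed

lemma H_Suc: fixes x :: real shows "H (Suc k) x = real k * H k x + x * (\<Sum>n. diffs (cc k) n * x^n)"
proof -
  have d: "summable (\<lambda>n. diffs (cc k) n * x^n)"
    by (rule termdiff_converges_all) (use summable_cc in auto)
  have "summable (\<lambda>n. (\<lambda>m. real m * cc k m * x^m) (Suc n))"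
    using summable_mult[OF d, of x] by (simp only: diffs_shift)
  hence s2: "summable (\<lambda>m. real m * cc k m * x^m)"
    using summable_Suc_iff[of "\<lambda>m. real m * cc k m * x^m"] by simp
  have e: "x * (\<Sum>n. diffs (cc k) n * x^n) = (\<Sum>m. real m * cc k m * x^m)"
  proof -
    have "x * (\<Sum>n. diffs (cc k) n * x^n) = (\<Sum>n. x * (diffs (cc k) n * x^n))"
      by (rule suminf_mult[OF d, symmetric])
    also have "\<dots> = (\<Sum>n. (\<lambda>m. real m * cc k m * x^m) (Suc n))"
      by (simp only: diffs_shift)
    also have "\<dots> = (\<Sum>m. real m * cc k m * x^m)"
      using suminf_split_head[OF s2] by (simp only: of_nat_0 mult_zero_left diff_zero)
    finally show ?thesis .
  qed
  have "H (Suc k) x = (\<Sum>m. real k * (cc k m * x^m) + real m * cc k m * x^m)"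
    unfolding H_def by (simp only: cc_Suc_pt)
  also have "\<dots> = (\<Sum>m. real k * (cc k m * x^m)) + (\<Sum>m. real m * cc k m * x^m)"
    by (rule suminf_add[symmetric, OF summable_mult[OF summable_cc] s2])
  also have "\<dots> = real k * H k x + x * (\<Sum>n. diffs (cc k) n * x^n)"
    unfolding e H_def by (simp only: suminf_mult[OF summable_cc])
  finally show ?thesis .
qed

lemma hasH: "(H k has_real_derivative (\<Sum>n. diffs (cc k) n * x^n)) (at x)"
  unfolding H_def[abs_def] by (rule termdiffs_strong_converges_everywhere) (rule summable_cc)

lemma alg0: "(-1::real)^0 * (real 0 * (- (u^2) * u ^ (0 - Suc 0)) * A + H' * - (u^2) * u^0)
   = (-1)^Suc 0 * u^Suc 0 * (real 0 * A + u * H')"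
  by (simp add: power2_eq_square)

lemma algS: "(-1::real)^Suc j * (real (Suc j) * (- (u^2) * u ^ (Suc j - Suc 0)) * A + H' * - (u^2) * u^Suc j)
   = (-1)^Suc (Suc j) * u^Suc (Suc j) * (real (Suc j) * A + u * H')"
  by (simp add: power2_eq_square algebra_simps)

lemma hasSP:
  assumes t: "t > 0"
  shows "(SP k has_real_derivative SP (Suc k) t) (at t)"
proof -
  define u where "u = inverse t"
  define H' where "H' = (\<Sum>n. diffs (cc k) n * u^n)"
  have dinv: "(inverse has_real_derivative - (u^2)) (at t)"
    using DERIV_inverse[of t UNIV] t by (simp add: u_def power2_eq_square)
  have dH: "((\<lambda>t. H k (inverse t)) has_real_derivative H' * - (u^2)) (at t)"
    using DERIV_chain2[OF hasH dinv] unfolding H'_def u_def .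
  have dp: "((\<lambda>t. inverse t ^ k) has_real_derivative real k * (- (u^2) * u ^ (k - Suc 0))) (at t)"
    using DERIV_power[OF dinv, of k] unfolding u_def .
  have D1: "((\<lambda>t. (-1)^k * (inverse t ^ k * H k (inverse t))) has_real_derivative
       (-1)^k * (real k * (- (u^2) * u ^ (k - Suc 0)) * H k (inverse t) + H' * - (u^2) * inverse t ^ k)) (at t)"
    by (rule DERIV_cmult[OF DERIV_mult[OF dp dH]])
  have E: "(-1)^k * (real k * (- (u^2) * u ^ (k - Suc 0)) * H k u + H' * - (u^2) * u^k)
       = (-1)^Suc k * u^Suc k * (real k * H k u + u * H')"
    by (cases k) (simp only: alg0, simp only: algS)
  have SPS: "SP (Suc k) t = (-1)^Suc k * u^Suc k * (real k * H k u + u * H')"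
    unfolding SP_def H_Suc u_def[symmetric] H'_def ..
  have SPeq: "SP k = (\<lambda>t. (-1)^k * (inverse t ^ k * H k (inverse t)))"
    by (simp add: SP_def[abs_def] mult.assoc)
  show ?thesis unfolding SPeq
  proof (rule DERIV_cong[OF D1])
    show "(-1)^k * (real k * (- (u^2) * u ^ (k - Suc 0)) * H k (inverse t) + H' * - (u^2) * inverse t ^ k)
        = SP (Suc k) t"
      unfolding u_def[symmetric] by (simp only: E SPS)
  qed
qed

lemma H_nonneg: "x \<ge> 0 \<Longrightarrow> 0 \<le> H k x"
  unfolding H_def by (intro suminf_nonneg summable_cc) (simp add: cc_nonneg)

lemma SP_sign: "t > 0 \<Longrightarrow> 0 \<le> (-1)^k * SP k t"
proof -
  assume t: "t > 0"
  have m1: "(-1::real)^k * (-1)^k = 1" by (simp flip: power_mult_distrib)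
  have "(-1)^k * SP k t = ((-1)^k * (-1)^k) * (inverse t ^ k * H k (inverse t))"
    unfolding SP_def by (simp only: mult.assoc)
  also have "\<dots> = inverse t ^ k * H k (inverse t)" by (simp only: m1 mult_1)
  finally show ?thesis using t by (simp add: H_nonneg)
qed

lemma H0: "H 0 x = exp x - (1 + x + x^2/2 + x^3/6)"
proof -
  have e: "(\<lambda>m. x^m / fact m) sums exp x"
    using exp_converges[of x] by (simp add: divide_inverse mult.commute)
  have f: "(\<lambda>m. if m \<in> {..<4} then x^m / fact m else 0) sums (\<Sum>m\<in>{..<4}. x^m / fact m)"
    by (rule sums_If_finite_set) simp
  have S: "(\<lambda>m. x^m / fact m - (if m \<in> {..<4} then x^m / fact m else 0)) sums
        (exp x - (\<Sum>m\<in>{..<4}. x^m / fact m))"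
    by (rule sums_diff[OF e f])
  have E1: "(\<lambda>m. x^m / fact m - (if m \<in> {..<4} then x^m / fact m else 0)) = (\<lambda>m. cc 0 m * x^m)"
    by (auto simp: cc_def fun_eq_iff)
  have E2: "(\<Sum>m\<in>{..<4}. x^m / fact m) = 1 + x + x^2/2 + x^3/6"
    by (simp add: eval_nat_numeral lessThan_Suc fact_numeral)
  have "(\<lambda>m. cc 0 m * x^m) sums (exp x - (1 + x + x^2/2 + x^3/6))"
    using S unfolding E1 E2 .
  thus ?thesis unfolding H_def by (rule sums_unique[symmetric])
qed

lemma H0_pos: "x > 0 \<Longrightarrow> 0 < H 0 x"
proof -
  assume x: "x > 0"
  have p4: "0 < cc 0 4 * x^4" using x by (simp add: cc_def)
  show ?thesis unfolding H_def
    by (rule suminf_pos2[OF summable_cc _ p4])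
       (rule mult_nonneg_nonneg[OF cc_nonneg zero_le_power[OF less_imp_le[OF x]]])
qed



lemma tower_add: "tower D S \<Longrightarrow> tower E S \<Longrightarrow> tower (\<lambda>k x. D k x + E k x) S"
  unfolding tower_def by (auto intro: DERIV_add)

lemma tower_diff: "tower D S \<Longrightarrow> tower E S \<Longrightarrow> tower (\<lambda>k x. D k x - E k x) S"
  unfolding tower_def by (auto intro: DERIV_diff)

lemma tower_scale: "tower D S \<Longrightarrow> tower (\<lambda>k x. c * D k x) S"
  unfolding tower_def by (auto intro: DERIV_cmult)

lemma tower_const: "tower (\<lambda>k x. if k = 0 then c else 0) S"
  unfolding tower_def by auto

lemma tower_SP: "tower SP {0<..}"
  unfolding tower_def by (auto intro: hasSP)

definition Atw :: "nat \<Rightarrow> real \<Rightarrow> real" where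
  "Atw k y = P 1 0 k y + 1/2 * P 2 0 k y + 1/6 * P 3 0 k y"

definition Rtw :: "nat \<Rightarrow> real \<Rightarrow> real" where
  "Rtw k y = Atw k y - (P 1 1 k y + 1/2 * P 2 1 k y + 1/6 * P 3 1 k y) - P 2 0 k y"

definition Mtw :: "nat \<Rightarrow> real \<Rightarrow> real" where
  "Mtw k y = 1/6 * leib (P 3 0) (P 3 1) k y"

lemma tower_Atw: "tower Atw {0<..}"
  unfolding Atw_def[abs_def]
  by (intro tower_add tower_scale tower_P) auto

lemma tower_Rtw: "tower Rtw {0<..}"
  unfolding Rtw_def[abs_def]
  by (intro tower_add tower_diff tower_scale tower_P tower_Atw) auto

lemma tower_Mtw: "tower Mtw {0<..}"
  unfolding Mtw_def[abs_def]
  by (intro tower_scale tower_leib tower_P) auto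

lemma M0: assumes y: "y > 0" shows "Rtw 0 y = Mtw 0 y"
proof -
  have "Rtw 0 y = inverse y + 1/2 * inverse y ^ 2 + 1/6 * inverse y ^ 3
     - (inverse (y+1) + 1/2 * inverse (y+1) ^ 2 + 1/6 * inverse (y+1) ^ 3) - inverse y ^ 2"
    by (simp add: Rtw_def Atw_def P_def)
  also have "\<dots> = 1/6 * (inverse y ^ 3 * inverse (y+1) ^ 3)"
  proof -
    define a where "a = inverse y"
    define b where "b = inverse (y+1)"
    have ha: "a * y = 1" using y by (simp add: a_def)
    have hb: "b * (y + 1) = 1" using y by (simp add: b_def)
    have "6 * (a + 1/2 * a ^ 2 + 1/6 * a ^ 3 - (b + 1/2 * b ^ 2 + 1/6 * b ^ 3) - a ^ 2) = 6 * (1/6 * (a ^ 3 * b ^ 3))"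
      using ha hb by algebra
    thus ?thesis unfolding a_def b_def by simp
  qed
  also have "\<dots> = Mtw 0 y" by (simp add: Mtw_def leib_def P_def)
  finally show ?thesis .
qed

lemma R_eq_M: assumes y: "y > 0" shows "Rtw k y = Mtw k y"
proof -
  have o: "open {0::real<..}" by simp
  have "(deriv ^^ k) (Rtw 0) y = Rtw k y"
    by (rule tower_deriv[OF o tower_Rtw _ ]) (use y in auto)
  moreover have "(deriv ^^ k) (Rtw 0) y = Mtw k y"
    by (rule tower_deriv[OF o tower_Mtw _ ]) (use y M0 in auto)
  ultimately show ?thesis by simp
qed

lemma leib_sign:
  assumes "\<And>i. 0 \<le> (-1)^i * D i x" "\<And>i. 0 \<le> (-1)^i * E i x"
  shows "0 \<le> (-1)^k * leib D E k x"
proof -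
  have "(-1)^k * leib D E k x = (\<Sum>i = 0..k. of_nat (k choose i) * ((-1)^i * D i x) * ((-1)^(k-i) * E (k-i) x))"
    unfolding leib_def sum_distrib_left
  proof (rule sum.cong[OF refl])
    fix i assume "i \<in> {0..k}"
    hence "(-1::real)^k = (-1)^i * (-1)^(k-i)" by (simp flip: power_add)
    thus "(-1)^k * (of_nat (k choose i) * D i x * E (k - i) x) =
      of_nat (k choose i) * ((-1)^i * D i x) * ((-1)^(k-i) * E (k-i) x)" by simp
  qed
  also have "\<dots> \<ge> 0"
    by (intro sum_nonneg mult_nonneg_nonneg assms) simp
  finally show ?thesis by simp
qed

lemma M_sign: "y > 0 \<Longrightarrow> 0 \<le> (-1)^k * Mtw k y"
proof -
  assume y: "y > 0"
  have "0 \<le> (-1)^k * leib (P 3 0) (P 3 1) k y"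
    by (rule leib_sign) (rule P_sign_nonneg, use y in simp)+
  thus ?thesis unfolding Mtw_def by simp
qed

definition q :: "nat \<Rightarrow> real \<Rightarrow> real" where
  "q k y = (-1)^k * Atw k y"

lemma q_nonneg: "y > 0 \<Longrightarrow> 0 \<le> q k y"
  unfolding q_def Atw_def distrib_left
  by (intro add_nonneg_nonneg) (simp_all add: mult.left_commute[of "(-1)^k"] P_sign_nonneg)

lemma r_ineq:
  assumes y: "y > 0"
  shows "fact (Suc k) * inverse y ^ (2 + k) \<le> q k y - q k (y+1)"
proof -
  have P1: "P n 1 k y = P n 0 k (y+1)" for n by (simp add: P_def)
  have P2: "(-1)^k * P 2 0 k y = fact (Suc k) * inverse y ^ (2 + k)"
    using P_sign[of y 0 k 2] y by (simp add: poch2)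
  have "(-1)^k * Rtw k y = q k y - q k (y+1) - (-1)^k * P 2 0 k y"
    unfolding Rtw_def q_def Atw_def P1 by (simp add: algebra_simps)
  moreover have "0 \<le> (-1)^k * Rtw k y" using M_sign[OF y] R_eq_M[OF y] by simp
  ultimately show ?thesis using P2 by simp
qed

lemma telesc:
  assumes y: "y > 0"
  shows "(\<Sum>j<N. fact (Suc k) * inverse (y + real j) ^ (2 + k)) \<le> q k y - q k (y + real N)"
proof (induction N)
  case 0 thus ?case by simp
next
  case (Suc N)
  have "fact (Suc k) * inverse (y + real N) ^ (2 + k) \<le> q k (y + real N) - q k (y + real N + 1)"
    by (rule r_ineq) (use y in simp)
  moreover have eq: "y + real (Suc N) = y + real N + 1" by simp
  ultimately show ?case using Suc.IH unfolding sum.lessThan_Suc eq by linarith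
qed

lemma PG_bound:
  assumes y: "y > 0"
  shows "(-1)^k * Polygamma (Suc k) y \<le> q k y"
proof -
  have "(\<lambda>j. inverse ((y + of_nat j) ^ Suc (Suc k))) sums
        ((-1) ^ Suc (Suc k) * Polygamma (Suc k) y / fact (Suc k))"
    by (rule Polygamma_LIMSEQ) (use y in auto)
  hence "(\<lambda>j. fact (Suc k) * inverse ((y + of_nat j) ^ Suc (Suc k))) sums
        (fact (Suc k) * ((-1) ^ Suc (Suc k) * Polygamma (Suc k) y / fact (Suc k)))"
    by (rule sums_mult)
  hence s: "(\<lambda>j. fact (Suc k) * inverse (y + real j) ^ (2 + k)) sums ((-1)^k * Polygamma (Suc k) y)"
    by (simp add: power_inverse)
  have "(\<Sum>j. fact (Suc k) * inverse (y + real j) ^ (2 + k)) \<le> q k y"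
  proof (rule suminf_le_const)
    show "summable (\<lambda>j. fact (Suc k) * inverse (y + real j) ^ (2 + k))" using s by (rule sums_summable)
    fix N
    have "q k (y + real N) \<ge> 0" by (rule q_nonneg) (use y in simp)
    thus "(\<Sum>j<N. fact (Suc k) * inverse (y + real j) ^ (2 + k)) \<le> q k y"
      using telesc[OF y, of k N] by simp
  qed
  thus ?thesis using s by (simp add: sums_iff)
qed



definition Ftw :: "nat \<Rightarrow> real \<Rightarrow> real" where
  "Ftw k t = SP k t + Atw k t - Polygamma (1 + k) t + (if k = 0 then 1 else 0)"

lemma tower_Ftw: "tower Ftw {0<..}"
  unfolding Ftw_def[abs_def]
  by (intro tower_add tower_diff tower_SP tower_Atw tower_PG tower_const)

lemma Atw0: "Atw 0 t = inverse t + 1/2 * inverse t ^ 2 + 1/6 * inverse t ^ 3"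
  by (simp add: Atw_def P_def)

lemma F0: "exp (1 / t) - Polygamma 1 t = Ftw 0 t"
  by (simp add: Ftw_def SP_def H0 Atw0 inverse_eq_divide)

lemma F_sign:
  assumes t: "t > 0"
  shows "0 \<le> (-1)^k * Ftw k t"
proof -
  have "(-1)^k * Ftw k t = (-1)^k * SP k t + (q k t - (-1)^k * Polygamma (Suc k) t)
      + (if k = 0 then 1 else 0)"
    by (simp add: Ftw_def q_def algebra_simps)
  moreover have "0 \<le> (-1)^k * SP k t" by (rule SP_sign[OF t])
  moreover have "(-1)^k * Polygamma (Suc k) t \<le> q k t" by (rule PG_bound[OF t])
  ultimately show ?thesis by simp
qed

theorem lemma2p2:
  shows "(\<forall>t::real. t > 0 \<longrightarrow> Polygamma 1 t < exp (1 / t) - 1)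
         \<and> completely_monotonic_on (\<lambda>t. exp (1 / t) - Polygamma 1 t) {0<..}"
proof
  show "\<forall>t::real. t > 0 \<longrightarrow> Polygamma 1 t < exp (1 / t) - 1"
  proof (intro allI impI)
    fix t :: real assume t: "t > 0"
    have h: "0 < H 0 (inverse t)" using t by (intro H0_pos) simp
    have p: "Polygamma 1 t \<le> q 0 t" using PG_bound[OF t, of 0] by simp
    have "q 0 t = inverse t + 1/2 * inverse t ^ 2 + 1/6 * inverse t ^ 3"
      by (simp add: q_def Atw0)
    with h p show "Polygamma 1 t < exp (1 / t) - 1"
      by (simp add: H0 inverse_eq_divide)
  qed
  show "completely_monotonic_on (\<lambda>t. exp (1 / t) - Polygamma 1 t) {0<..}"
  proof (rule cm_tower[OF _ tower_Ftw])
    show "open {0::real<..}" by simp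
    fix x :: real assume "x \<in> {0<..}"
    thus "0 \<le> (-1)^k * Ftw k x" for k by (intro F_sign) simp
    show "exp (1 / x) - Polygamma 1 x = Ftw 0 x" by (rule F0)
  qed
qed


end
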